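(* Let $Y$ be a non-degenerate metric continuum such that some nonempty open subset of $Y$ contains no arc, and let $p\colon Y\times[0,1]\to Y$ be the projection. Then $p$ cannot be approximated by Krasinkiewicz maps: there exists $\varepsilon>0$ such that no map $q\colon Y\times[0,1]\to Y$ with $\operatorname{dist}(q(z),p(z))<\varepsilon$ for all $z\in Y\times[0,1]$ is a Krasinkiewicz map.
   Context: A continuum is a nonempty compact connected metrizable space; non-degenerate means it has more than one point. An arc is a space homeomorphic to $[0,1]$. For a compact metrizable $X$, a map $g\colon X\to M$ is Krasinkiewicz if every subcontinuum of $X$ is either contained in a fiber of $g$ or contains a component of some fiber of $g$. *)

theory Defs
  imports "HOL-Analysis.Analysis"
begin

definition subcontinuum :: "'a::topological_space set \<Rightarrow> 'a set \<Rightarrow> bool" where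
  "subcontinuum X C \<longleftrightarrow> C \<subseteq> X \<and> C \<noteq> {} \<and> compact C \<and> connected C"

definition fiber :: "'a set \<Rightarrow> ('a \<Rightarrow> 'b) \<Rightarrow> 'b \<Rightarrow> 'a set" where
  "fiber X g y = {x \<in> X. g x = y}"

definition krasinkiewicz_map :: "'a::topological_space set \<Rightarrow> ('a \<Rightarrow> 'b) \<Rightarrow> bool" where
  "krasinkiewicz_map X g \<longleftrightarrow>
     (\<forall>C. subcontinuum X C \<longrightarrow>
        (\<exists>y. C \<subseteq> fiber X g y) \<or> (\<exists>y K. K \<in> components (fiber X g y) \<and> K \<subseteq> C))"

end

theory Submission
  imports Defs
begin

lemma kuratowski_fun_in:
  fixes x x0 :: "'a::metric_space"
  shows "(\<lambda>z. dist x z - dist x0 z) \<in> bcontfun"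
proof (rule bcontfun_normI)
  show "continuous_on UNIV (\<lambda>z. dist x z - dist x0 z)"
    by (intro continuous_intros)
  show "norm (dist x z - dist x0 z) \<le> dist x x0" for z
    by (smt (verit) dist_commute dist_triangle real_norm_def)
qed

lemma kuratowski_isometry:
  fixes x y x0 :: "'a::metric_space"
  defines "E \<equiv> \<lambda>x. Bcontfun (\<lambda>z. dist x z - dist x0 z) :: 'a \<Rightarrow>\<^sub>C real"
  shows "dist (E x) (E y) = dist x y"
proof -
  have app: "apply_bcontfun (E u) = (\<lambda>z. dist u z - dist x0 z)" for u
    unfolding E_def by (simp add: Bcontfun_inverse kuratowski_fun_in)
  have "dist (E x) (E y) \<le> dist x y"
    by (rule dist_bound) (simp add: app dist_real_def, smt (verit) dist_commute dist_triangle)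
  moreover have "dist (apply_bcontfun (E x) y) (apply_bcontfun (E y) y) \<le> dist (E x) (E y)"
    by (rule dist_bounded)
  ultimately show ?thesis by (simp add: app dist_real_def)
qed

lemma path_contains_interval_homeo:
  fixes g :: "real \<Rightarrow> 'a::metric_space"
  assumes "path g" "g 0 \<noteq> g 1"
  shows "\<exists>A. A \<subseteq> path_image g \<and> A homeomorphic {0..1::real}"
proof -
  define E where "E \<equiv> \<lambda>x. Bcontfun (\<lambda>z. dist x z - dist (g 0) z) :: 'a \<Rightarrow>\<^sub>C real"
  have iso: "dist (E x) (E y) = dist x y" for x y
    unfolding E_def by (rule kuratowski_isometry)
  have contE: "continuous_on UNIV E"
    unfolding continuous_on_iff by (metis iso)
  have pp: "path (E \<circ> g)"
    using assms(1) unfolding path_def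
    by (metis contE continuous_on_compose continuous_on_subset subset_UNIV)
  have ne: "E (g 0) \<noteq> E (g 1)"
    using iso assms(2) by (metis dist_eq_0_iff)
  obtain h where h: "arc h" "path_image h \<subseteq> path_image (E \<circ> g)"
    "pathstart h = E (g 0)" "pathfinish h = E (g 1)"
    using path_contains_arc[OF pp _ _ ne] by (auto simp: pathstart_def pathfinish_def)
  define k where "k \<equiv> \<lambda>t. inv_into (path_image g) E (h t)"
  have hin: "h t \<in> E ` path_image g" if "t \<in> {0..1}" for t
    using h(2) that by (auto simp: path_image_def image_comp)
  have Ek: "E (k t) = h t" and kin: "k t \<in> path_image g" if "t \<in> {0..1}" for t
    using hin[OF that] unfolding k_def by (auto intro: f_inv_into_f inv_into_into)
  have dk: "dist (k s) (k t) = dist (h s) (h t)" if "s \<in> {0..1}" "t \<in> {0..1}" for s t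
    using iso Ek that by metis
  have conth: "continuous_on {0..1} h"
    using h(1) by (simp add: arc_def path_def)
  have contk: "continuous_on {0..1} k"
    using conth unfolding continuous_on_iff by (metis dk)
  have injk: "inj_on k {0..1}"
  proof
    fix s t assume st: "s \<in> {0..1}" "t \<in> {0..1}" "k s = k t"
    then have "h s = h t" using Ek by metis
    then show "s = t" using h(1) st by (simp add: arc_def inj_on_def)
  qed
  have "{0..1::real} homeomorphic k ` {0..1}"
    by (rule homeomorphic_compact[OF _ contk refl injk]) simp
  then show ?thesis
    using kin homeomorphic_sym by blast
qed

theorem proposition3p7:
  fixes Y :: "'a::metric_space set"
  assumes "compact Y" and "connected Y"
    and "\<exists>a\<in>Y. \<exists>b\<in>Y. a \<noteq> b"
    and "\<exists>U. openin (top_of_set Y) U \<and> U \<noteq> {} \<and>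
              \<not> (\<exists>A. A \<subseteq> U \<and> A homeomorphic {0..1::real})"
  shows "\<exists>\<epsilon>>0. \<forall>q :: 'a \<times> real \<Rightarrow> 'a.
           continuous_on (Y \<times> {0..1}) q \<and> q ` (Y \<times> {0..1}) \<subseteq> Y \<and>
           (\<forall>z\<in>Y \<times> {0..1}. dist (q z) (fst z) < \<epsilon>)
           \<longrightarrow> \<not> krasinkiewicz_map (Y \<times> {0..1}) q"
proof -
  obtain U where Uo: "openin (top_of_set Y) U" and "U \<noteq> {}"
    and noarc: "\<not> (\<exists>A. A \<subseteq> U \<and> A homeomorphic {0..1::real})"
    using assms(4) by blast
  obtain y0 where "y0 \<in> U" using \<open>U \<noteq> {}\<close> by blast
  have UY: "U \<subseteq> Y" using Uo openin_imp_subset by blast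
  have y0Y: "y0 \<in> Y" using UY \<open>y0 \<in> U\<close> by blast
  obtain \<delta> where "\<delta> > 0" and \<delta>: "\<And>y. y \<in> Y \<Longrightarrow> dist y y0 < \<delta> \<Longrightarrow> y \<in> U"
    using Uo \<open>y0 \<in> U\<close> unfolding openin_euclidean_subtopology_iff by blast
  obtain b where "b \<in> Y" "b \<noteq> y0" using assms(3) by metis
  define r where "r = min (\<delta>/2) (dist y0 b / 2)"
  have "r > 0" using \<open>\<delta> > 0\<close> \<open>b \<noteq> y0\<close> by (simp add: r_def)
  define S where "S = Y \<inter> cball y0 r"
  define X where "X = top_of_set Y"
  have SY: "S \<subseteq> Y" by (simp add: S_def)
  have y0S: "y0 \<in> S" using y0Y \<open>r > 0\<close> by (simp add: S_def)
  have subX: "subtopology X S = top_of_set S"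
    using SY by (simp add: X_def subtopology_subtopology Int_absorb1 inf.absorb2)
  define C where "C = connected_component_of_set (subtopology X S) y0"
  have cs: "connected_space X" using assms(2) by (simp add: X_def connected_space_subtopology)
  have cpX: "compact_space X" using assms(1) by (simp add: X_def compact_space_subtopology)
  have lc: "locally_compact_space X" using cpX by (rule compact_imp_locally_compact_space)
  have hs: "Hausdorff_space X" by (simp add: X_def Hausdorff_space_subtopology)
  have clS: "closedin X S" unfolding X_def S_def by (simp add: closedin_closed_Int)
  have "b \<notin> S" using \<open>b \<noteq> y0\<close> by (auto simp: S_def r_def dist_commute)
  then have SneY: "S \<noteq> topspace X" using \<open>b \<in> Y\<close> by (auto simp: X_def)
  have Ccomp: "C \<in> connected_components_of (subtopology X S)"
    unfolding C_def using y0S SY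
    by (simp add: connected_component_in_connected_components_of subX)
  have clC: "closedin X C"
    unfolding C_def by (rule closedin_trans_full[OF closedin_connected_component_of clS])
  have cC: "compactin X C" by (rule closedin_compact_space[OF cpX clC])
  obtain z where zC: "z \<in> C" and zF: "z \<in> X frontier_of S"
    using boundary_bumping_theorem_closed_gen[OF cs lc hs clS SneY cC Ccomp] by blast
  have CS: "C \<subseteq> S"
    using connected_component_of_subset_topspace[of "subtopology X S" y0] SY
    by (simp add: C_def X_def)
  have y0C: "y0 \<in> C"
    unfolding C_def using y0S SY y0Y by (simp add: X_def connected_component_of_refl)
  have compC: "compact C"
    using cC CS by (simp add: X_def compactin_subtopology)
  have connC: "connected C"
  proof -
    have "connectedin (subtopology X S) C"
      unfolding C_def by (rule connectedin_connected_component_of)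
    then show ?thesis unfolding subX by (simp add: connectedin_subtopology)
  qed
  have zr: "dist y0 z \<ge> r"
  proof (rule ccontr)
    assume "\<not> r \<le> dist y0 z"
    then have zb: "z \<in> Y \<inter> ball y0 r" using zC CS SY by auto
    have "Y \<inter> ball y0 r \<subseteq> S" by (auto simp: S_def)
    moreover have "openin X (Y \<inter> ball y0 r)" by (simp add: X_def openin_open_Int)
    ultimately have "Y \<inter> ball y0 r \<subseteq> X interior_of S" by (rule interior_of_maximal)
    then show False using zb zF by (auto simp: frontier_of_def)
  qed
  have "r \<le> \<delta>/2" by (simp add: r_def)
  define \<epsilon> where "\<epsilon> = r / 3"
  have "\<epsilon> > 0" using \<open>r > 0\<close> by (simp add: \<epsilon>_def)
  show ?thesis
  proof (intro exI[of _ \<epsilon>] conjI allI impI)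
    show "\<epsilon> > 0" by fact
    fix q :: "'a \<times> real \<Rightarrow> 'a"
    assume qa: "continuous_on (Y \<times> {0..1}) q \<and> q ` (Y \<times> {0..1}) \<subseteq> Y \<and>
           (\<forall>z\<in>Y \<times> {0..1}. dist (q z) (fst z) < \<epsilon>)"
    then have qc: "continuous_on (Y \<times> {0..1}) q" and qY: "q ` (Y \<times> {0..1}) \<subseteq> Y"
      and qd: "\<And>y t. y \<in> Y \<Longrightarrow> t \<in> {0..1} \<Longrightarrow> dist (q (y,t)) y < \<epsilon>" by auto
    have vert: "q (y, t) = q (y, 0)" if yS: "y \<in> S" and t: "t \<in> {0..1}" for y t
    proof (rule ccontr)
      assume ne: "q (y, t) \<noteq> q (y, 0)"
      define g where "g = (\<lambda>s. q (y, s * t))"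
      have yY: "y \<in> Y" using yS SY by auto
      have st: "s * t \<in> {0..1}" if "s \<in> {0..1}" for s
        using that t by (auto intro: mult_le_one)
      have "path g"
        unfolding path_def g_def
      proof (rule continuous_on_compose2[OF qc])
        show "continuous_on {0..1} (\<lambda>s. (y, s * t))" by (intro continuous_intros)
        show "(\<lambda>s. (y, s * t)) ` {0..1} \<subseteq> Y \<times> {0..1}" using yY st by blast
      qed
      moreover have "g 0 \<noteq> g 1" using ne by (simp add: g_def)
      ultimately obtain A where A: "A \<subseteq> path_image g" "A homeomorphic {0..1::real}"
        using path_contains_interval_homeo by blast
      have "path_image g \<subseteq> U"
      proof
        fix w assume "w \<in> path_image g"
        then obtain s where s: "s \<in> {0..1}" "w = q (y, s * t)"
          by (auto simp: path_image_def g_def)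
        have wY: "w \<in> Y" using qY s st yY by auto
        have "dist w y < \<epsilon>" using qd[OF yY st[OF s(1)]] s by simp
        moreover have "dist y y0 \<le> r" using yS by (simp add: S_def dist_commute)
        ultimately have "dist w y0 < \<delta>"
          using dist_triangle[of w y0 y] \<open>r \<le> \<delta>/2\<close> \<open>r > 0\<close> unfolding \<epsilon>_def by linarith
        then show "w \<in> U" using \<delta> wY by blast
      qed
      then show False using noarc A by blast
    qed
    have y0z: "q (y0, 0) \<noteq> q (z, 0)"
    proof
      assume eq: "q (y0, 0) = q (z, 0)"
      have zY: "z \<in> Y" using zC CS SY by auto
      have "dist (q (y0,0)) y0 < \<epsilon>" "dist (q (z,0)) z < \<epsilon>"
        using qd y0Y zY by auto
      then have "dist y0 (q (z,0)) < \<epsilon>" "dist (q (z,0)) z < \<epsilon>" using eq by (simp_all add: dist_commute)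
      then have "dist y0 z < 2 * \<epsilon>" using dist_triangle[of y0 z "q (z,0)"] by linarith
      then show False using zr \<open>r > 0\<close> unfolding \<epsilon>_def by linarith
    qed
    show "\<not> krasinkiewicz_map (Y \<times> {0..1}) q"
      unfolding krasinkiewicz_map_def
    proof
      assume K: "\<forall>D. subcontinuum (Y \<times> {0..1}) D \<longrightarrow>
        (\<exists>y. D \<subseteq> fiber (Y \<times> {0..1}) q y) \<or>
        (\<exists>y K. K \<in> components (fiber (Y \<times> {0..1}) q y) \<and> K \<subseteq> D)"
      have "subcontinuum (Y \<times> {0..1}) (C \<times> {0::real})"
      proof -
        have "C \<times> {0::real} \<subseteq> Y \<times> {0..1}" using CS SY by auto
        moreover have "compact (C \<times> {0::real})" using compC by (simp add: compact_Times)
        moreover have "connected (C \<times> {0::real})" using connC by (simp add: connected_Times)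
        ultimately show ?thesis using y0C by (auto simp: subcontinuum_def)
      qed
      with K consider (a) w where "C \<times> {0} \<subseteq> fiber (Y \<times> {0..1}) q w"
        | (b) w K where "K \<in> components (fiber (Y \<times> {0..1}) q w)" "K \<subseteq> C \<times> {0}"
        by blast
      then show False
      proof cases
        case a
        then have "q (y0,0) = w" "q (z,0) = w" using y0C zC by (auto simp: fiber_def)
        then show False using y0z by simp
      next
        case b
        obtain x where xK: "x \<in> K" using b(1) in_components_nonempty by blast
        obtain y where xy: "x = (y, 0)" "y \<in> C" using xK b(2) by auto
        have yS: "y \<in> S" using xy CS by auto
        have Keq: "K = connected_component_set (fiber (Y \<times> {0..1}) q w) x"
        proof -
          obtain x' where "K = connected_component_set (fiber (Y \<times> {0..1}) q w) x'"
            using b(1) by (auto simp: components_iff)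
          then show ?thesis using xK connected_component_eq by metis
        qed
        have xF: "x \<in> fiber (Y \<times> {0..1}) q w" using b(1) xK in_components_subset by blast
        then have qw: "q (y,0) = w" by (simp add: fiber_def xy)
        have "{y} \<times> {0..1} \<subseteq> fiber (Y \<times> {0..1}) q w"
          using vert[OF yS] qw yS SY by (auto simp: fiber_def)
        moreover have "connected ({y} \<times> {0..1::real})"
          by (intro connected_Times) auto
        moreover have "x \<in> {y} \<times> {0..1}" using xy by auto
        ultimately have "{y} \<times> {0..1} \<subseteq> K"
          unfolding Keq by (intro connected_component_maximal)
        moreover have "(y, 1::real) \<in> {y} \<times> {0..1}" by simp
        ultimately have "(y, 1::real) \<in> C \<times> {0}" using b(2) by blast
        then show False by simp
      qed
    qed
  qed
qed

end
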